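(* Let $n$ and $\ell$ be even positive integers. Then \[\max(n,\ell)\ge \binom{n}{2}-\left(\frac{n}{2}+k\right),\] where $k$ is the smallest nonnegative integer such that $\gcd(n-2k-1,\ell)=1$.
   Context: All graphs are finite and simple. Vertex labels lie in $\mathbb{Z}_\ell$ ($\ell\ge 2$). In the neighborhood Lights Out game on $G$, toggling a vertex $v$ adds $1$ (mod $\ell$) to the label of each vertex of the closed neighborhood $N[v]$; the game is won when all labels are $0$. $G$ is $N$-AW if the game can be won from every initial labeling. $\max(n,\ell)$ is the maximum number of edges of an $N$-AW graph on $n$ vertices. *)

theory Defs
  imports Main "HOL-Computational_Algebra.Primes"
begin

definition simple_graph :: "nat \<Rightarrow> nat set set \<Rightarrow> bool" where
  "simple_graph n E \<longleftrightarrow> (\<forall>e\<in>E. e \<subseteq> {0..<n} \<and> card e = 2)"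

definition closed_nbhd :: "nat set set \<Rightarrow> nat \<Rightarrow> nat set" where
  "closed_nbhd E v = insert v {u. {u, v} \<in> E}"

text \<open>Neighborhood Lights Out over Z_l: labels are integers taken modulo l; toggling
  vertex u (t u times) adds t u to each label in N[u]. The game is won when all
  labels are 0 mod l. N-AW: winnable from every initial labeling.\<close>
definition N_AW :: "nat \<Rightarrow> nat \<Rightarrow> nat set set \<Rightarrow> bool" where
  "N_AW l n E \<longleftrightarrow> (\<forall>a :: nat \<Rightarrow> int. \<exists>t :: nat \<Rightarrow> nat. \<forall>v<n.
      (a v + (\<Sum>u\<in>{0..<n}. if v \<in> closed_nbhd E u then int (t u) else 0)) mod int l = 0)"

text \<open>max(n,l): maximum number of edges of an N-AW graph on n vertices.\<close>
definition maxAW :: "nat \<Rightarrow> nat \<Rightarrow> nat" where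
  "maxAW n l = Max {card E | E. simple_graph n E \<and> N_AW l n E}"

end

theory Submission
  imports Defs "HOL-Library.FuncSet"
begin

definition hadj :: "nat \<Rightarrow> nat \<Rightarrow> nat \<Rightarrow> bool" where
  "hadj k u v \<longleftrightarrow> (u div 2 = v div 2 \<and> u \<noteq> v) \<or> (u = 0 \<and> even v \<and> 2 \<le> v \<and> v \<le> 2*k)
     \<or> (v = 0 \<and> even u \<and> 2 \<le> u \<and> u \<le> 2*k)"

lemma hadj_sym: "hadj k u v = hadj k v u" unfolding hadj_def by auto

lemma hadj_irrefl: "\<not> hadj k u u" by (simp add: hadj_def)

definition HH :: "nat \<Rightarrow> nat \<Rightarrow> nat set set" where
  "HH n k = {{u,v} | u v. u < n \<and> v < n \<and> hadj k u v}"

definition GG :: "nat \<Rightarrow> nat \<Rightarrow> nat set set" where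
  "GG n k = {e. e \<subseteq> {0..<n} \<and> card e = 2} - HH n k"

lemma HH_iff: "{a,b} \<in> HH n k \<longleftrightarrow> a < n \<and> b < n \<and> hadj k a b"
  unfolding HH_def by (auto simp: doubleton_eq_iff hadj_sym)

lemma nbhd_iff:
  assumes "u < n" "v < n"
  shows "v \<in> closed_nbhd (GG n k) u \<longleftrightarrow> \<not> hadj k u v"
  using assms
  by (cases "u = v") (auto simp: closed_nbhd_def GG_def HH_iff hadj_irrefl hadj_sym card_insert_if)

lemma simple_GG: "simple_graph n (GG n k)"
  unfolding simple_graph_def GG_def by auto

lemma HH_sub: "HH n k \<subseteq> {e. e \<subseteq> {0..<n} \<and> card e = 2}"
  unfolding HH_def by (auto simp: card_insert_if hadj_irrefl)

lemma HH_eq: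
  assumes "even n" "2*k < n"
  shows "HH n k = (\<lambda>i. {2*i, 2*i+1}) ` {..<n div 2} \<union> (\<lambda>i. {0, 2*i}) ` {1..k}"
proof
  show "HH n k \<subseteq> (\<lambda>i. {2*i, 2*i+1}) ` {..<n div 2} \<union> (\<lambda>i. {0, 2*i}) ` {1..k}"
  proof
    fix e assume "e \<in> HH n k"
    then obtain u v where e: "e = {u,v}" "u < n" "v < n" "hadj k u v" unfolding HH_def by auto
    show "e \<in> (\<lambda>i. {2*i, 2*i+1}) ` {..<n div 2} \<union> (\<lambda>i. {0, 2*i}) ` {1..k}"
    proof (cases "u div 2 = v div 2 \<and> u \<noteq> v")
      case True
      then have "(u = 2*(u div 2) \<and> v = 2*(u div 2)+1) \<or> (v = 2*(u div 2) \<and> u = 2*(u div 2)+1)"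
        by presburger
      then have "e = {2*(u div 2), 2*(u div 2)+1}" using e(1) by auto
      moreover have "u div 2 < n div 2" using e(2) assms(1) by presburger
      ultimately show ?thesis by blast
    next
      case False
      then have "(u = 0 \<and> even v \<and> 2 \<le> v \<and> v \<le> 2*k) \<or> (v = 0 \<and> even u \<and> 2 \<le> u \<and> u \<le> 2*k)"
        using e(4) unfolding hadj_def by blast
      then show ?thesis
      proof
        assume h: "u = 0 \<and> even v \<and> 2 \<le> v \<and> v \<le> 2*k"
        then have "e = {0, 2*(v div 2)}" "v div 2 \<in> {1..k}" using e(1) by auto
        then show ?thesis by blast
      next
        assume h: "v = 0 \<and> even u \<and> 2 \<le> u \<and> u \<le> 2*k"
        then have "e = {0, 2*(u div 2)}" "u div 2 \<in> {1..k}" using e(1) by auto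
        then show ?thesis by blast
      qed
    qed
  qed
next
  show "(\<lambda>i. {2*i, 2*i+1}) ` {..<n div 2} \<union> (\<lambda>i. {0, 2*i}) ` {1..k} \<subseteq> HH n k"
  proof
    fix e assume "e \<in> (\<lambda>i. {2*i, 2*i+1}) ` {..<n div 2} \<union> (\<lambda>i. {0, 2*i}) ` {1..k}"
    then show "e \<in> HH n k"
    proof
      assume "e \<in> (\<lambda>i. {2*i, 2*i+1}) ` {..<n div 2}"
      then obtain i where i: "i < n div 2" "e = {2*i, 2*i+1}" by auto
      have "2*i+1 < n" using i(1) assms(1) by presburger
      moreover have "hadj k (2*i) (2*i+1)" unfolding hadj_def by simp
      ultimately show ?thesis using i(2) HH_iff by auto
    next
      assume "e \<in> (\<lambda>i. {0, 2*i}) ` {1..k}"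
      then obtain i where i: "i \<in> {1..k}" "e = {0, 2*i}" by auto
      have "2*i < n" using i(1) assms(2) by auto
      moreover have "hadj k 0 (2*i)" unfolding hadj_def using i(1) by auto
      ultimately show ?thesis using i(2) HH_iff by auto
    qed
  qed
qed

lemma card_HH:
  assumes "even n" "2*k < n"
  shows "card (HH n k) = n div 2 + k"
proof -
  have i1: "inj_on (\<lambda>i. {2*i, 2*i+1::nat}) {..<n div 2}"
    by (auto simp: inj_on_def doubleton_eq_iff)
  have i2: "inj_on (\<lambda>i. {0, 2*i::nat}) {1..k}"
    by (auto simp: inj_on_def doubleton_eq_iff)
  have ne: "{2*i, 2*i+1} \<noteq> {0, 2*j}" for i j :: nat
  proof
    assume "{2*i, 2*i+1} = {0, 2*j}"
    then have "2*i+1 \<in> {0,2*j}" by blast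
    then show False by simp presburger
  qed
  have d: "(\<lambda>i. {2*i, 2*i+1::nat}) ` {..<n div 2} \<inter> (\<lambda>i. {0, 2*i}) ` {1..k} = {}"
    using ne by blast
  show ?thesis
    unfolding HH_eq[OF assms]
    by (subst card_Un_disjoint) (use i1 i2 d in \<open>auto simp: card_image\<close>)
qed


definition cc :: "nat \<Rightarrow> nat \<Rightarrow> int" where
  "cc k u = (if even u then 1 else if u = 1 then 1 - int k else if u \<le> 2*k+1 then 0 else 1)"

lemma sum_cc_aux:
  "(\<Sum>u<2*Suc m. cc k u) = (if m \<le> k then int m + 2 - int k else 2 * int m + 2 - 2 * int k)"
proof (induction m)
  case 0
  show ?case by (simp add: numeral_2_eq_2 cc_def)
next
  case (Suc m)
  have e: "2 * Suc (Suc m) = Suc (Suc (2 * Suc m))" by simp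
  have "(\<Sum>u<2*Suc (Suc m). cc k u) = (\<Sum>u<2*Suc m. cc k u) + cc k (2 * Suc m) + cc k (Suc (2 * Suc m))"
    unfolding e by simp
  also have "cc k (2 * Suc m) = 1" by (simp add: cc_def)
  also have "cc k (Suc (2 * Suc m)) = (if Suc m \<le> k then 0 else 1)" by (simp add: cc_def)
  finally show ?case using Suc.IH by auto
qed

lemma sum_cc:
  assumes "even n" "2*k+2 \<le> n"
  shows "(\<Sum>u\<in>{0..<n}. cc k u) = int n - 2 * int k"
proof -
  obtain m where m: "n = 2 * Suc m" using assms by (metis dvdE le_zero_eq not_less0 gr0_implies_Suc mult_0_right zero_less_iff_neq_zero add_is_0 zero_neq_numeral)
  have "k \<le> m" using assms m by simp
  then show ?thesis using sum_cc_aux[where m=m and k=k] m by (simp add: atLeast0LessThan del: sum.lessThan_Suc mult_Suc_right)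
qed

lemma card_evens:
  assumes "2*k < n"
  shows "card {u\<in>{0..<n}. even u \<and> 2 \<le> u \<and> u \<le> 2*k} = k"
proof -
  have "{u\<in>{0..<n}. even u \<and> 2 \<le> u \<and> u \<le> 2*k} = (\<lambda>i. 2*i) ` {1..k}"
    using assms by (auto elim!: evenE)
  moreover have "inj_on (\<lambda>i::nat. 2*i) {1..k}" by (auto simp: inj_on_def)
  ultimately show ?thesis by (simp add: card_image)
qed


lemma kernel:
  fixes z :: "nat \<Rightarrow> int" and L :: int
  assumes ev: "even n" and kn: "2*k+2 \<le> n" and cop: "coprime L (int n - 2*int k - 1)"
    and h: "\<And>v. v < n \<Longrightarrow> L dvd (\<Sum>u\<in>{0..<n}. z u) - (\<Sum>u\<in>{0..<n}. if hadj k u v then z u else 0)"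
  shows "\<And>u. u < n \<Longrightarrow> L dvd z u"
proof -
  define S where "S = (\<Sum>u\<in>{0..<n}. z u)"
  have h': "\<And>v. v < n \<Longrightarrow> L dvd S - (\<Sum>u\<in>{0..<n}. if hadj k u v then z u else 0)"
    using h unfolding S_def .
  have odd_case: "(\<Sum>u\<in>{0..<n}. if hadj k u v then z u else 0) = z (v - 1)"
    if "v < n" "odd v" for v
  proof -
    have "hadj k u v \<longleftrightarrow> v - 1 = u" for u
      using that(2) unfolding hadj_def by presburger
    then have "(\<Sum>u\<in>{0..<n}. if hadj k u v then z u else 0) = (\<Sum>u\<in>{0..<n}. if v - 1 = u then z u else 0)"
      by simp
    also have "\<dots> = z (v - 1)" using that by (simp add: sum.delta)
    finally show ?thesis .
  qed
  have mid_case: "(\<Sum>u\<in>{0..<n}. if hadj k u v then z u else 0) = z (v + 1) + z 0"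
    if "v < n" "even v" "2 \<le> v" "v \<le> 2*k" for v
  proof -
    have "(if hadj k u v then z u else 0) = (if v + 1 = u then z u else 0) + (if 0 = u then z u else 0)" for u
      using that unfolding hadj_def by (auto; presburger)
    then have "(\<Sum>u\<in>{0..<n}. if hadj k u v then z u else 0)
       = (\<Sum>u\<in>{0..<n}. if v + 1 = u then z u else 0) + (\<Sum>u\<in>{0..<n}. if 0 = u then z u else 0)"
      by (simp add: sum.distrib)
    also have "\<dots> = z (v + 1) + z 0" using that ev kn by (simp add: sum.delta)
    finally show ?thesis .
  qed
  have high_case: "(\<Sum>u\<in>{0..<n}. if hadj k u v then z u else 0) = z (v + 1)"
    if "v < n" "even v" "2*k < v" for v
  proof -
    have "hadj k u v \<longleftrightarrow> v + 1 = u" for u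
      using that unfolding hadj_def by (auto; presburger)
    then have "(\<Sum>u\<in>{0..<n}. if hadj k u v then z u else 0) = (\<Sum>u\<in>{0..<n}. if v + 1 = u then z u else 0)"
      by simp
    also have "\<dots> = z (v + 1)" using that ev by (simp add: sum.delta; presburger)
    finally show ?thesis .
  qed
  define P where "P u \<longleftrightarrow> even u \<and> 2 \<le> u \<and> u \<le> 2*k" for u
  have zero_case: "(\<Sum>u\<in>{0..<n}. if hadj k u 0 then z u else 0)
      = z 1 + (\<Sum>u\<in>{0..<n}. if P u then z u else 0)"
  proof -
    have "(if hadj k u 0 then z u else 0) = (if 1 = u then z u else 0) + (if P u then z u else 0)" for u
      unfolding hadj_def P_def by auto
    then have "(\<Sum>u\<in>{0..<n}. if hadj k u 0 then z u else 0)
       = (\<Sum>u\<in>{0..<n}. if 1 = u then z u else 0) + (\<Sum>u\<in>{0..<n}. if P u then z u else 0)"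
      by (simp add: sum.distrib)
    also have "\<dots> = z 1 + (\<Sum>u\<in>{0..<n}. if P u then z u else 0)" using kn by (simp add: sum.delta)
    finally show ?thesis .
  qed
  have e: "L dvd S - z u" if "u < n" "even u" for u
  proof -
    have "Suc u < n" using that ev by presburger
    then show ?thesis using h'[of "Suc u"] odd_case[of "Suc u"] that by simp
  qed
  have sumP: "L dvd (\<Sum>u\<in>{0..<n}. if P u then z u else 0) - int k * S"
  proof -
    have "(\<Sum>u\<in>{0..<n}. if P u then S else 0) = (\<Sum>u\<in>{u\<in>{0..<n}. P u}. S)"
      by (rule sum.inter_filter[symmetric]) simp
    also have "\<dots> = int k * S" using card_evens[of k n] kn unfolding P_def by simp
    finally have 1: "(\<Sum>u\<in>{0..<n}. if P u then S else 0) = int k * S" .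
    have "(\<Sum>u\<in>{0..<n}. if P u then z u else 0) - int k * S = (\<Sum>u\<in>{0..<n}. if P u then z u - S else 0)"
      unfolding 1[symmetric] sum_subtractf[symmetric] by (rule sum.cong) auto
    also have "L dvd \<dots>"
    proof (rule dvd_sum)
      fix u assume "u \<in> {0..<n}"
      then show "L dvd (if P u then z u - S else 0)"
        using e[of u] unfolding P_def by (auto simp: dvd_diff_commute)
    qed
    finally show ?thesis .
  qed
  define c where "c = cc k"
  have all: "L dvd z u - S * c u" if "u < n" for u
  proof (cases "even u")
    case True
    then show ?thesis using e[OF that True] by (simp add: c_def cc_def dvd_diff_commute)
  next
    case False
    show ?thesis
    proof (cases "u = 1")
      case True
      have a: "L dvd S - (z 1 + (\<Sum>u\<in>{0..<n}. if P u then z u else 0))"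
        using h'[of 0] zero_case kn by simp
      have eq: "z u - S * c u = - ((S - (z 1 + (\<Sum>u\<in>{0..<n}. if P u then z u else 0)))
            + ((\<Sum>u\<in>{0..<n}. if P u then z u else 0) - int k * S))"
        using True by (simp add: c_def cc_def algebra_simps)
      show ?thesis unfolding eq dvd_minus_iff using a sumP by (rule dvd_add)
    next
      case u1: False
      show ?thesis
      proof (cases "u \<le> 2*k+1")
        case True
        have v: "u - 1 < n" "even (u - 1)" "2 \<le> u - 1" "u - 1 \<le> 2*k"
          using that False u1 True by presburger+
        have a: "L dvd S - (z u + z 0)"
          using h'[OF v(1)] mid_case[OF v] False by (simp add: odd_pos)
        have b: "L dvd S - z 0" using e[of 0] kn by simp
        have eq: "z u - S * c u = (S - z 0) - (S - (z u + z 0))"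
          using True False u1 by (simp add: c_def cc_def)
        show ?thesis unfolding eq using b a by (rule dvd_diff)
      next
        case hi: False
        have v: "u - 1 < n" "even (u - 1)" "2*k < u - 1"
          using that False hi by presburger+
        have a: "L dvd S - z u"
          using h'[OF v(1)] high_case[OF v] False by (simp add: odd_pos)
        then show ?thesis using hi False u1 by (simp add: c_def cc_def dvd_diff_commute)
      qed
    qed
  qed
  have "S - S * (int n - 2 * int k) = (\<Sum>u\<in>{0..<n}. z u - S * c u)"
    unfolding sum_subtractf sum_distrib_left[symmetric] c_def using sum_cc[OF ev kn] S_def by simp
  also have "L dvd \<dots>" using all by (intro dvd_sum) auto
  finally have "L dvd S - S * (int n - 2 * int k)" .
  moreover have "S - S * (int n - 2 * int k) = - ((int n - 2 * int k - 1) * S)" by (simp add: algebra_simps)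
  ultimately have "L dvd - ((int n - 2 * int k - 1) * S)" by simp
  then have "L dvd (int n - 2 * int k - 1) * S" by (simp only: dvd_minus_iff)
  then have LS: "L dvd S" using cop by (simp add: coprime_dvd_mult_right_iff)
  fix u assume "u < n"
  have "L dvd (z u - S * c u) + S * c u" by (rule dvd_add[OF all[OF \<open>u < n\<close>] dvd_mult2[OF LS]])
  then show "L dvd z u" by simp
qed


lemma modeq_lemma:
  fixes a b L :: int
  assumes "0 \<le> a" "a < L" "0 \<le> b" "b < L" "L dvd a - b"
  shows "a = b"
proof -
  have "a mod L = b mod L" using assms(5) by (simp add: mod_eq_dvd_iff)
  then show ?thesis using assms by simp
qed

lemma NAW_GG:
  assumes ev: "even n" and kn: "2*k+2 \<le> n" and l: "l > 0"
    and cop: "coprime (int l) (int n - 2*int k - 1)"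
  shows "N_AW l n (GG n k)"
proof -
  define L where "L = int l"
  have L: "L > 0" using l L_def by simp
  define A where "A = PiE {0..<n} (\<lambda>_. {0..<L})"
  define Nx where "Nx x v = (\<Sum>u\<in>{0..<n}. if v \<in> closed_nbhd (GG n k) u then x u else 0)"
    for x :: "nat \<Rightarrow> int" and v
  define F where "F x = restrict (\<lambda>v. Nx x v mod L) {0..<n}" for x
  have finA: "finite A" unfolding A_def by (intro finite_PiE) auto
  have FA: "F ` A \<subseteq> A" unfolding A_def F_def using L by (auto simp: PiE_iff)
  have injF: "inj_on F A"
  proof
    fix x y assume x: "x \<in> A" and y: "y \<in> A" and Fxy: "F x = F y"
    define z where "z u = x u - y u" for u
    have Nz: "Nx z v = (\<Sum>u\<in>{0..<n}. z u) - (\<Sum>u\<in>{0..<n}. if hadj k u v then z u else 0)"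
      if "v < n" for v
    proof -
      have "Nx z v = (\<Sum>u\<in>{0..<n}. if hadj k u v then 0 else z u)"
        unfolding Nx_def using that by (intro sum.cong) (auto simp: nbhd_iff)
      moreover have "(\<Sum>u\<in>{0..<n}. if hadj k u v then 0 else z u) + (\<Sum>u\<in>{0..<n}. if hadj k u v then z u else 0)
          = (\<Sum>u\<in>{0..<n}. z u)"
        unfolding sum.distrib[symmetric] by (intro sum.cong) auto
      ultimately show ?thesis by simp
    qed
    have "L dvd (\<Sum>u\<in>{0..<n}. z u) - (\<Sum>u\<in>{0..<n}. if hadj k u v then z u else 0)"
      if "v < n" for v
    proof -
      have "F x v = F y v" using Fxy by simp
      then have "Nx x v mod L = Nx y v mod L" using that by (simp add: F_def)
      then have "L dvd Nx x v - Nx y v" by (simp add: mod_eq_dvd_iff)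
      moreover have "Nx x v - Nx y v = Nx z v"
        unfolding Nx_def z_def sum_subtractf[symmetric] by (intro sum.cong) auto
      ultimately show ?thesis using Nz[OF that] by simp
    qed
    then have dz: "\<And>u. u < n \<Longrightarrow> L dvd z u"
      using kernel[of n k L z] ev kn cop L_def by (simp add: coprime_commute)
    show "x = y"
    proof
      fix u
      show "x u = y u"
      proof (cases "u < n")
        case True
        then have "x u \<in> {0..<L}" "y u \<in> {0..<L}" using x y unfolding A_def by auto
        then show ?thesis using modeq_lemma dz[OF True] unfolding z_def by auto
      next
        case False
        then show ?thesis using x y unfolding A_def by (auto simp: PiE_def extensional_def)
      qed
    qed
  qed
  have surj: "F ` A = A" using endo_inj_surj[OF finA FA injF] .
  show ?thesis unfolding N_AW_def
  proof
    fix a :: "nat \<Rightarrow> int"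
    define b where "b = restrict (\<lambda>v. (- a v) mod L) {0..<n}"
    have "b \<in> A" unfolding A_def b_def
      using L by (intro PiE_I) (simp_all add: pos_mod_bound pos_mod_sign)
    then have "b \<in> F ` A" using surj by simp
    then obtain x where x: "x \<in> A" "F x = b" by (auto simp del: restrict_apply)
    have xpos: "\<And>u. u < n \<Longrightarrow> x u \<ge> 0" using x(1) unfolding A_def by auto
    show "\<exists>t::nat \<Rightarrow> nat. \<forall>v<n. (a v + (\<Sum>u\<in>{0..<n}. if v \<in> closed_nbhd (GG n k) u then int (t u) else 0)) mod int l = 0"
    proof (rule exI[where x="\<lambda>u. nat (x u)"], intro allI impI)
      fix v assume v: "v < n"
      have "(\<Sum>u\<in>{0..<n}. if v \<in> closed_nbhd (GG n k) u then int (nat (x u)) else 0) = Nx x v"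
        unfolding Nx_def by (intro sum.cong) (auto simp: xpos)
      moreover have NxL: "Nx x v mod L = (- a v) mod L"
      proof -
        have "F x v = b v" using x(2) by simp
        then show ?thesis using v unfolding F_def b_def by simp
      qed
      moreover have "(a v + Nx x v) mod L = 0"
      proof -
        have "(a v + Nx x v) mod L = (a v + Nx x v mod L) mod L" by (simp add: mod_add_right_eq)
        also have "\<dots> = (a v + (- a v) mod L) mod L" by (simp only: NxL)
        also have "\<dots> = (a v + - a v) mod L" by (simp add: mod_add_right_eq)
        finally show ?thesis by simp
      qed
      ultimately show "(a v + (\<Sum>u\<in>{0..<n}. if v \<in> closed_nbhd (GG n k) u then int (nat (x u)) else 0)) mod int l = 0"
        unfolding L_def[symmetric] by simp
    qed
  qed
qed


theorem proposition4p5: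
  fixes n l :: nat
  assumes "even n" "n > 0" "even l" "l > 0"
  shows "int (maxAW n l) \<ge>
    int (n choose 2) - (int n div 2 + int (LEAST k::nat. gcd (int n - 2 * int k - 1) (int l) = 1))"
proof -
  define K where "K = (LEAST k::nat. gcd (int n - 2 * int k - 1) (int l) = 1)"
  have n2: "n \<ge> 2" using assms(1,2) by presburger
  have w: "gcd (int n - 2 * int (n div 2 - 1) - 1) (int l) = 1"
  proof -
    have e: "int n - 2 * int (n div 2 - 1) - 1 = 1" using n2 assms(1) by (auto elim!: evenE simp: of_nat_diff)
    show ?thesis by (subst e) simp
  qed
  have g: "gcd (int n - 2 * int K - 1) (int l) = 1"
    unfolding K_def by (rule LeastI[of _ "n div 2 - 1"]) (rule w)
  have Kle: "K \<le> n div 2 - 1" unfolding K_def by (rule Least_le) (rule w)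
  have kn: "2*K+2 \<le> n" using Kle n2 assms(1) by (auto elim!: evenE)
  have cop: "coprime (int l) (int n - 2*int K - 1)"
    using g by (simp add: coprime_iff_gcd_eq_1 gcd.commute)
  have aw: "N_AW l n (GG n K)" using NAW_GG[OF assms(1) kn assms(4) cop] .
  have fin: "finite {card E | E. simple_graph n E \<and> N_AW l n E}"
  proof (rule finite_subset)
    show "{card E | E. simple_graph n E \<and> N_AW l n E} \<subseteq> card ` Pow (Pow {0..<n})"
      unfolding simple_graph_def by auto
  qed auto
  have ge: "card (GG n K) \<le> maxAW n l"
    unfolding maxAW_def by (rule Max_ge[OF fin]) (use simple_GG aw in blast)
  define KS where "KS = {e. e \<subseteq> {0..<n} \<and> card e = 2}"
  have cKS: "card KS = n choose 2" unfolding KS_def using n_subsets[of "{0..<n}" 2] by simp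
  have finKS: "finite KS" unfolding KS_def by (rule finite_subset[of _ "Pow {0..<n}"]) auto
  have sub: "HH n K \<subseteq> KS" using HH_sub unfolding KS_def .
  have cG: "card (GG n K) = card KS - card (HH n K)"
    unfolding GG_def KS_def[symmetric] using card_Diff_subset[OF finite_subset[OF sub finKS] sub] .
  have le: "card (HH n K) \<le> card KS" using card_mono[OF finKS sub] .
  have cH: "card (HH n K) = n div 2 + K" using card_HH[OF assms(1)] kn by simp
  have "int (card (GG n K)) = int (n choose 2) - (int n div 2 + int K)"
    using cG le cH cKS by (simp add: of_nat_diff zdiv_int)
  then show ?thesis using ge unfolding K_def[symmetric] by linarith
qed

end
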